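(* Let $G$ be a simple graph with $n$ vertices and let $G'$ be obtained from $G$ by a symmetric $\mathcal K_{xy}$-operation. Then $P(\lambda,G)\ge P(\lambda,G')$ for every real $\lambda\ge n$.
   Context: All graphs are finite, undirected, without loops. For a graph $G$ on $n$ vertices let $L(G)=D(G)-A(G)$ be its Laplacian matrix ($D(G)$ diagonal degree matrix, $A(G)$ adjacency matrix). Write $\det(\lambda I-L(G))=\lambda P(\lambda,G)$; $P(\lambda,G)$ is the Laplacian polynomial. $\mathcal K_{xy}$-operation: let $G$ be a simple graph, $x\ne y$ vertices, $\mathcal K$ an induced subgraph of $G$ containing $x$ and $y$, and $N(v)$ the neighbourhood of $v$. Put $X=N(x)\setminus(V(\mathcal K)\cup N(y))$, $Y=N(y)\setminus(V(\mathcal K)\cup N(x))$, $[x,X]=\{xv:v\in X\}$, $[y,X]=\{yv:v\in X\}$, $[y,Y]=\{yv:v\in Y\}$. The graph $\mathcal K_{xy}(G)=(G-[x,X])\cup[y,X]$ (on the same vertex set) is obtained from $G$ by the $\mathcal K_{xy}$-operation. The operation is called symmetric if the graph $G-([x,X]\cup[y,Y])$ has an automorphism $\alpha$ with $\alpha(x)=y$, $\alpha(y)=x$, $\alpha(V(\mathcal K))=V(\mathcal K)$, and $\alpha(v)=v$ for every $v\in X\cup Y$. *)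

theory Defs
  imports "Jordan_Normal_Form.Char_Poly"
begin

definition simple_graph :: "nat \<Rightarrow> (nat \<Rightarrow> nat \<Rightarrow> bool) \<Rightarrow> bool" where
  "simple_graph n E \<longleftrightarrow> (\<forall>u v. E u v \<longrightarrow> u < n \<and> v < n) \<and>
     (\<forall>u v. E u v \<longrightarrow> E v u) \<and> (\<forall>u. \<not> E u u)"

definition nbhd :: "(nat \<Rightarrow> nat \<Rightarrow> bool) \<Rightarrow> nat \<Rightarrow> nat set" where
  "nbhd E v = {u. E v u}"

definition laplacian :: "nat \<Rightarrow> (nat \<Rightarrow> nat \<Rightarrow> bool) \<Rightarrow> real mat" where
  "laplacian n E = mat n n (\<lambda>(i,j). if i = j then real (card (nbhd E i))
                                    else if E i j then -1 else 0)"

text \<open>Laplacian polynomial: det(\<lambda>I - L) = \<lambda> P(\<lambda>).\<close>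
definition lap_poly :: "nat \<Rightarrow> (nat \<Rightarrow> nat \<Rightarrow> bool) \<Rightarrow> real poly" where
  "lap_poly n E = char_poly (laplacian n E) div [:0, 1:]"

definition Xset :: "(nat \<Rightarrow> nat \<Rightarrow> bool) \<Rightarrow> nat set \<Rightarrow> nat \<Rightarrow> nat \<Rightarrow> nat set" where
  "Xset E K x y = nbhd E x - (K \<union> nbhd E y)"

definition del_star :: "(nat \<Rightarrow> nat \<Rightarrow> bool) \<Rightarrow> nat \<Rightarrow> nat set \<Rightarrow> nat \<Rightarrow> nat \<Rightarrow> bool" where
  "del_star E x S u v \<longleftrightarrow> E u v \<and> \<not> ((u = x \<and> v \<in> S) \<or> (v = x \<and> u \<in> S))"

definition Kxy_op :: "(nat \<Rightarrow> nat \<Rightarrow> bool) \<Rightarrow> nat set \<Rightarrow> nat \<Rightarrow> nat \<Rightarrow> nat \<Rightarrow> nat \<Rightarrow> bool" where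
  "Kxy_op E K x y u v \<longleftrightarrow>
     del_star E x (Xset E K x y) u v \<or>
     (u = y \<and> v \<in> Xset E K x y) \<or> (v = y \<and> u \<in> Xset E K x y)"

definition graph_aut :: "nat \<Rightarrow> (nat \<Rightarrow> nat \<Rightarrow> bool) \<Rightarrow> (nat \<Rightarrow> nat) \<Rightarrow> bool" where
  "graph_aut n E \<alpha> \<longleftrightarrow> bij_betw \<alpha> {0..<n} {0..<n} \<and>
     (\<forall>u<n. \<forall>v<n. E u v \<longleftrightarrow> E (\<alpha> u) (\<alpha> v))"

text \<open>Valid K_xy-operation data: K \<subseteq> V (the induced subgraph on K), x \<noteq> y in K.\<close>
definition Kxy_valid :: "nat \<Rightarrow> (nat \<Rightarrow> nat \<Rightarrow> bool) \<Rightarrow> nat set \<Rightarrow> nat \<Rightarrow> nat \<Rightarrow> bool" where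
  "Kxy_valid n E K x y \<longleftrightarrow> K \<subseteq> {0..<n} \<and> x \<in> K \<and> y \<in> K \<and> x \<noteq> y"

definition Kxy_symmetric :: "nat \<Rightarrow> (nat \<Rightarrow> nat \<Rightarrow> bool) \<Rightarrow> nat set \<Rightarrow> nat \<Rightarrow> nat \<Rightarrow> bool" where
  "Kxy_symmetric n E K x y \<longleftrightarrow>
     (\<exists>\<alpha>. graph_aut n (del_star (del_star E x (Xset E K x y)) y (Xset E K y x)) \<alpha> \<and>
          \<alpha> x = y \<and> \<alpha> y = x \<and> \<alpha> ` K = K \<and>
          (\<forall>v \<in> Xset E K x y \<union> Xset E K y x. \<alpha> v = v))"

end

theory Submission
  imports Defs
begin

lemma neg_add_cancel_mat: "(B::real mat) \<in> carrier_mat k k \<Longrightarrow> - B + (1\<^sub>m k + B) = 1\<^sub>m k"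
  by (rule eq_matI, auto)

lemma sylvester:
  fixes S :: "real mat"
  assumes S: "S \<in> carrier_mat n n" and Si: "Si \<in> carrier_mat n n" and SSi: "S * Si = 1\<^sub>m n"
    and U: "U \<in> carrier_mat n k" and W: "W \<in> carrier_mat k n"
  shows "det (S + U * W) = det S * det (1\<^sub>m k + W * Si * U)"
proof -
  define M where "M = four_block_mat S (-U) W (1\<^sub>m k)"
  define N1 where "N1 = four_block_mat (1\<^sub>m n) (0\<^sub>m n k) (-W) (1\<^sub>m k)"
  define N2 where "N2 = four_block_mat S (0\<^sub>m n k) W (1\<^sub>m k)"
  define N3 where "N3 = four_block_mat (1\<^sub>m n) (-(Si*U)) (0\<^sub>m k n) (1\<^sub>m k + W*Si*U)"
  have cM: "M \<in> carrier_mat (n+k) (n+k)" unfolding M_def using S by auto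
  have cN1: "N1 \<in> carrier_mat (n+k) (n+k)" unfolding N1_def by auto
  have cN2: "N2 \<in> carrier_mat (n+k) (n+k)" unfolding N2_def using S by auto
  have cN3: "N3 \<in> carrier_mat (n+k) (n+k)" unfolding N3_def by (rule four_block_carrier_mat, simp, insert W Si U, auto)
  have "M * N1 = four_block_mat (S * 1\<^sub>m n + (-U) * (-W)) (S * 0\<^sub>m n k + (-U) * 1\<^sub>m k)
      (W * 1\<^sub>m n + 1\<^sub>m k * (-W)) (W * 0\<^sub>m n k + 1\<^sub>m k * 1\<^sub>m k)"
    unfolding M_def N1_def by (rule mult_four_block_mat, insert S U W, auto)
  also have "\<dots> = four_block_mat (S + U * W) (-U) (0\<^sub>m k n) (1\<^sub>m k)"
    using S U W by (intro cong_four_block_mat, auto)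
  finally have MN1: "M * N1 = four_block_mat (S + U * W) (-U) (0\<^sub>m k n) (1\<^sub>m k)" .
  have d1: "det (M * N1) = det (S + U * W)"
    unfolding MN1 by (subst det_four_block_mat_lower_left_zero[of _ n _ k], insert S U W, auto)
  have dN1: "det N1 = 1"
    unfolding N1_def by (subst det_four_block_mat_upper_right_zero[of _ n _ k], insert W, auto)
  have "N2 * N3 = four_block_mat (S * 1\<^sub>m n + 0\<^sub>m n k * 0\<^sub>m k n) (S * (-(Si*U)) + 0\<^sub>m n k * (1\<^sub>m k + W*Si*U))
      (W * 1\<^sub>m n + 1\<^sub>m k * 0\<^sub>m k n) (W * (-(Si*U)) + 1\<^sub>m k * (1\<^sub>m k + W*Si*U))"
    unfolding N2_def N3_def by (rule mult_four_block_mat, insert S Si U W, auto)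
  also have "\<dots> = M"
  proof -
    have "S * (-(Si*U)) = - U" using S Si U SSi
      by (simp add: assoc_mult_mat[symmetric])
    moreover have "W * (-(Si*U)) + 1\<^sub>m k * (1\<^sub>m k + W*Si*U) = 1\<^sub>m k"
    proof -
      have e: "W * Si * U = W * (Si * U)" using W Si U by auto
      have c: "W * (Si * U) \<in> carrier_mat k k" using W Si U by auto
      have "W * (-(Si*U)) + 1\<^sub>m k * (1\<^sub>m k + W*Si*U) = - (W * (Si * U)) + (1\<^sub>m k + W * (Si * U))"
        unfolding e using c W Si U by simp
      also have "\<dots> = 1\<^sub>m k" by (rule neg_add_cancel_mat[OF c])
      finally show ?thesis .
    qed
    ultimately show ?thesis unfolding M_def using S U W by (intro cong_four_block_mat, auto)
  qed
  finally have N23: "N2 * N3 = M" .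
  have dN2: "det N2 = det S"
    unfolding N2_def by (subst det_four_block_mat_upper_right_zero[of _ n _ k], insert S W, auto)
  have dN3: "det N3 = det (1\<^sub>m k + W*Si*U)"
    unfolding N3_def by (subst det_four_block_mat_lower_left_zero[of _ n _ k], insert Si U W, auto)
  have "det (S + U * W) = det M * det N1" using d1 det_mult[OF cM cN1] by simp
  also have "\<dots> = det N2 * det N3" using dN1 N23 det_mult[OF cN2 cN3] by simp
  finally show ?thesis using dN2 dN3 by simp
qed

lemma sum2: "(\<Sum>i\<in>{0..<2::nat}. f i) = f 0 + (f 1 :: real)"
  by (simp add: numeral_2_eq_2)

lemma det_2x2: assumes "(A::real mat) \<in> carrier_mat 2 2"
  shows "det A = A $$ (0,0) * A $$ (1,1) - A $$ (0,1) * A $$ (1,0)"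
proof -
  have "det A = (\<Sum>j<2. A $$ (0,j) * cofactor A 0 j)"
    by (rule laplace_expansion_row[OF assms], simp)
  also have "\<dots> = A $$ (0,0) * cofactor A 0 0 + A $$ (0,1) * cofactor A 0 1"
    by (simp add: numeral_2_eq_2)
  also have "cofactor A 0 0 = A $$ (1,1)"
    unfolding cofactor_def using assms
    by (subst det_single, auto simp: mat_delete_def insert_index_def)
  also have "cofactor A 0 1 = - A $$ (1,0)"
    unfolding cofactor_def using assms
    by (subst det_single, auto simp: mat_delete_def insert_index_def)
  finally show ?thesis by simp
qed

lemma rank2_det:
  fixes S :: "real mat"
  assumes S: "S \<in> carrier_mat n n" and Si: "Si \<in> carrier_mat n n" and SSi: "S * Si = 1\<^sub>m n"
    and m: "m \<in> carrier_vec n" and s: "s \<in> carrier_vec n"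
  shows "det (S + mat n n (\<lambda>(i,j). c * (m $ i * s $ j + s $ i * m $ j)))
    = det S * ((1 + c * (s \<bullet> (Si *\<^sub>v m))) * (1 + c * (m \<bullet> (Si *\<^sub>v s)))
         - c^2 * (s \<bullet> (Si *\<^sub>v s)) * (m \<bullet> (Si *\<^sub>v m)))"
proof -
  define U where "U = mat_of_cols n [m, s]"
  define W where "W = mat_of_rows n [c \<cdot>\<^sub>v s, c \<cdot>\<^sub>v m]"
  have U: "U \<in> carrier_mat n 2" unfolding U_def using mat_of_cols_carrier(1)[of n "[m,s]"] by (simp add: numeral_2_eq_2)
  have W: "W \<in> carrier_mat 2 n" unfolding W_def using mat_of_rows_carrier(1)[of n "[c \<cdot>\<^sub>v s, c \<cdot>\<^sub>v m]"] by (simp add: numeral_2_eq_2)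
  have UW: "U * W = mat n n (\<lambda>(i,j). c * (m $ i * s $ j + s $ i * m $ j))"
    by (rule eq_matI, insert m s, auto simp: U_def W_def mat_of_cols_def mat_of_rows_def
        scalar_prod_def sum2 algebra_simps)
  have cU0: "col U 0 = m" "col U 1 = s" unfolding U_def using m s by auto
  have rW: "row W 0 = c \<cdot>\<^sub>v s" "row W 1 = c \<cdot>\<^sub>v m" unfolding W_def using m s by auto
  have e: "W * Si * U = W * (Si * U)" using W Si U by auto
  have ent: "(W * (Si * U)) $$ (a, b) = row W a \<bullet> (Si *\<^sub>v col U b)" if "a < 2" "b < 2" for a b
    using that W Si U by (subst index_mult_mat, auto simp: mult_mat_vec_def)
  define B where "B = 1\<^sub>m 2 + W * Si * U"
  have B: "B \<in> carrier_mat 2 2" unfolding B_def using W Si U by auto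
  have Sim: "Si *\<^sub>v m \<in> carrier_vec n" "Si *\<^sub>v s \<in> carrier_vec n" using Si m s by auto
  have B00: "B $$ (0,0) = 1 + c * (s \<bullet> (Si *\<^sub>v m))"
    unfolding B_def e using ent[of 0 0] W Si U cU0 rW Sim s by auto
  have B11: "B $$ (1,1) = 1 + c * (m \<bullet> (Si *\<^sub>v s))"
    unfolding B_def e using ent[of 1 1] W Si U cU0 rW Sim m by auto
  have B01: "B $$ (0,1) = c * (s \<bullet> (Si *\<^sub>v s))"
    unfolding B_def e using ent[of 0 1] W Si U cU0 rW Sim s by auto
  have B10: "B $$ (1,0) = c * (m \<bullet> (Si *\<^sub>v m))"
    unfolding B_def e using ent[of 1 0] W Si U cU0 rW Sim m by auto
  have "det (S + U * W) = det S * det B" unfolding B_def by (rule sylvester[OF S Si SSi U W])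
  also have "det B = B $$ (0,0) * B $$ (1,1) - B $$ (0,1) * B $$ (1,0)" by (rule det_2x2[OF B])
  finally show ?thesis unfolding UW B00 B11 B01 B10 by (simp add: power2_eq_square algebra_simps)
qed

definition wlap :: "nat \<Rightarrow> (nat \<Rightarrow> nat \<Rightarrow> real) \<Rightarrow> real mat" where
  "wlap n w = mat n n (\<lambda>(i,j). if i = j then (\<Sum>k\<in>{0..<n}-{i}. w i k) else - w i j)"

definition Sm :: "nat \<Rightarrow> (nat \<Rightarrow> nat \<Rightarrow> real) \<Rightarrow> real \<Rightarrow> real mat" where
  "Sm n w lam = lam \<cdot>\<^sub>m 1\<^sub>m n - wlap n w"

lemma wlap_carrier[simp]: "wlap n w \<in> carrier_mat n n" unfolding wlap_def by auto
lemma Sm_carrier[simp]: "Sm n w lam \<in> carrier_mat n n" unfolding Sm_def by (rule minus_carrier_mat, simp)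
lemma Sm_dims[simp]: "dim_row (Sm n w lam) = n" "dim_col (Sm n w lam) = n" by (simp_all add: Sm_def wlap_def)

lemma Sm_index: "i < n \<Longrightarrow> j < n \<Longrightarrow> Sm n w lam $$ (i,j) =
   (if i = j then lam - (\<Sum>k\<in>{0..<n}-{i}. w i k) else w i j)"
  unfolding Sm_def wlap_def by auto

lemma Sm_mult: assumes i: "i < n" and v: "v \<in> carrier_vec n"
  shows "(Sm n w lam *\<^sub>v v) $ i = lam * v $ i - (\<Sum>k\<in>{0..<n}. w i k * (v $ i - v $ k))"
proof -
  have 1: "(Sm n w lam *\<^sub>v v) $ i = (\<Sum>j\<in>{0..<n}. Sm n w lam $$ (i,j) * v $ j)"
    using i v by (simp add: scalar_prod_def row_def)
  have 2: "(\<Sum>j\<in>{0..<n}. Sm n w lam $$ (i,j) * v $ j) = Sm n w lam $$ (i,i) * v $ i + (\<Sum>j\<in>{0..<n}-{i}. Sm n w lam $$ (i,j) * v $ j)"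
    using i by (subst sum.remove[of _ i], auto)
  have 3: "(\<Sum>j\<in>{0..<n}-{i}. Sm n w lam $$ (i,j) * v $ j) = (\<Sum>j\<in>{0..<n}-{i}. w i j * v $ j)"
    using i by (intro sum.cong, auto simp: Sm_index)
  have 4: "Sm n w lam $$ (i,i) = lam - (\<Sum>k\<in>{0..<n}-{i}. w i k)" using i by (simp add: Sm_index)
  have 5: "(\<Sum>k\<in>{0..<n}. w i k * (v $ i - v $ k)) = w i i * (v $ i - v $ i) + (\<Sum>k\<in>{0..<n}-{i}. w i k * (v $ i - v $ k))"
    using i by (subst sum.remove[of _ i], auto)
  have 6: "(\<Sum>k\<in>{0..<n}-{i}. w i k * (v $ i - v $ k)) = (\<Sum>k\<in>{0..<n}-{i}. w i k) * v $ i - (\<Sum>j\<in>{0..<n}-{i}. w i j * v $ j)"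
    by (simp add: sum_distrib_right sum_distrib_left sum_subtractf algebra_simps)
  show ?thesis unfolding 1 2 3 4 5 6 by (simp add: algebra_simps)
qed

lemma Sm_sum: assumes v: "v \<in> carrier_vec n" and sym: "\<And>i k. i < n \<Longrightarrow> k < n \<Longrightarrow> w i k = w k i"
  shows "(\<Sum>i\<in>{0..<n}. (Sm n w lam *\<^sub>v v) $ i) = lam * (\<Sum>i\<in>{0..<n}. v $ i)"
proof -
  let ?a = "\<lambda>i k. w i k * (v $ i - v $ k)"
  have "(\<Sum>i\<in>{0..<n}. \<Sum>k\<in>{0..<n}. ?a i k) = (\<Sum>k\<in>{0..<n}. \<Sum>i\<in>{0..<n}. ?a i k)"
    by (rule sum.swap)
  also have "\<dots> = (\<Sum>k\<in>{0..<n}. \<Sum>i\<in>{0..<n}. - ?a k i)"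
    by (intro sum.cong refl, auto simp: sym algebra_simps)
  also have "\<dots> = - (\<Sum>i\<in>{0..<n}. \<Sum>k\<in>{0..<n}. ?a i k)" by (simp add: sum_negf)
  finally have z: "(\<Sum>i\<in>{0..<n}. \<Sum>k\<in>{0..<n}. ?a i k) = 0" by simp
  have "(\<Sum>i\<in>{0..<n}. (Sm n w lam *\<^sub>v v) $ i) = (\<Sum>i\<in>{0..<n}. lam * v $ i - (\<Sum>k\<in>{0..<n}. ?a i k))"
    by (intro sum.cong refl Sm_mult, auto simp: v)
  also have "\<dots> = lam * (\<Sum>i\<in>{0..<n}. v $ i)" using z by (simp add: sum_subtractf sum_distrib_left)
  finally show ?thesis .
qed

lemma max_principle:
  assumes w01: "\<And>i k. i < n \<Longrightarrow> k < n \<Longrightarrow> 0 \<le> w i k \<and> w i k \<le> 1"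
    and sym: "\<And>i k. i < n \<Longrightarrow> k < n \<Longrightarrow> w i k = w k i"
    and lam: "lam > real n" and phi: "phi \<in> carrier_vec n"
    and g: "Sm n w lam *\<^sub>v phi = g" and gsum: "(\<Sum>i\<in>{0..<n}. g $ i) = 0"
    and u: "u < n" and umax: "\<And>k. k < n \<Longrightarrow> phi $ k \<le> phi $ u" and gu: "g $ u \<le> 0"
  shows "\<And>k. k < n \<Longrightarrow> phi $ k = 0"
proof -
  have lam0: "lam > 0" using lam by linarith
  have "lam * (\<Sum>i\<in>{0..<n}. phi $ i) = 0" using Sm_sum[OF phi, of w lam] sym g gsum by simp
  hence s0: "(\<Sum>i\<in>{0..<n}. phi $ i) = 0" using lam0 by simp
  have "g $ u = lam * phi $ u - (\<Sum>k\<in>{0..<n}. w u k * (phi $ u - phi $ k))"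
    using Sm_mult[OF u phi, of w lam] g by simp
  hence "lam * phi $ u \<le> (\<Sum>k\<in>{0..<n}. w u k * (phi $ u - phi $ k))" using gu by simp
  also have "\<dots> \<le> (\<Sum>k\<in>{0..<n}. (phi $ u - phi $ k))"
  proof (rule sum_mono)
    fix k assume k: "k \<in> {0..<n}"
    have "0 \<le> phi $ u - phi $ k" using umax k by auto
    thus "w u k * (phi $ u - phi $ k) \<le> phi $ u - phi $ k"
      using w01[OF u, of k] k by (simp add: mult_left_le_one_le)
  qed
  also have "\<dots> = real n * phi $ u" using s0 by (simp add: sum_subtractf)
  finally have "(lam - real n) * phi $ u \<le> 0" by (simp add: algebra_simps)
  hence pu: "phi $ u \<le> 0" using lam by (simp add: mult_le_0_iff)
  have "(\<Sum>i\<in>{0..<n}. - phi $ i) = 0" using s0 by (simp add: sum_negf)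
  moreover have "\<And>i. i \<in> {0..<n} \<Longrightarrow> 0 \<le> - phi $ i" using umax pu by force
  ultimately have "\<forall>i\<in>{0..<n}. - phi $ i = 0" using sum_nonneg_eq_0_iff[of "{0..<n}" "\<lambda>i. - phi $ i"] by simp
  thus "\<And>k. k < n \<Longrightarrow> phi $ k = 0" by auto
qed

lemma argmax_ex: fixes n :: nat assumes "n > 0" shows "\<exists>u<n. \<forall>k<n. (f k :: real) \<le> f u"
proof -
  have fin: "finite (f ` {0..<n})" by (rule finite_imageI, simp)
  have ne: "f ` {0..<n} \<noteq> {}" using assms by simp
  obtain u where u: "u \<in> {0..<n}" "f u = Max (f ` {0..<n})" using Max_in[OF fin ne] by auto
  show ?thesis using u Max_ge[OF fin] by auto
qed

lemma Sm_det_nz: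
  assumes w01: "\<And>i k. i < n \<Longrightarrow> k < n \<Longrightarrow> 0 \<le> w i k \<and> w i k \<le> 1"
    and sym: "\<And>i k. i < n \<Longrightarrow> k < n \<Longrightarrow> w i k = w k i"
    and lam: "lam > real n" and n: "n > 0"
  shows "det (Sm n w lam) \<noteq> 0"
proof
  assume "det (Sm n w lam) = 0"
  then obtain v where v: "v \<in> carrier_vec n" "v \<noteq> 0\<^sub>v n" "Sm n w lam *\<^sub>v v = 0\<^sub>v n"
    using det_0_iff_vec_prod_zero_field[OF Sm_carrier] by blast
  obtain u where u: "u < n" "\<And>k. k < n \<Longrightarrow> v $ k \<le> v $ u" using argmax_ex[OF n, of "\<lambda>k. v $ k"] by auto
  have "\<And>k. k < n \<Longrightarrow> v $ k = 0"
    by (rule max_principle[OF w01 sym lam v(1) v(3) _ u], auto simp: u(1))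
  hence "v = 0\<^sub>v n" using v(1) by (intro eq_vecI, auto)
  with v(2) show False by simp
qed

definition Sinv :: "nat \<Rightarrow> (nat \<Rightarrow> nat \<Rightarrow> real) \<Rightarrow> real \<Rightarrow> real mat" where
  "Sinv n w lam = (1 / det (Sm n w lam)) \<cdot>\<^sub>m adj_mat (Sm n w lam)"

lemma Sinv_carrier[simp]: "Sinv n w lam \<in> carrier_mat n n"
  unfolding Sinv_def using adj_mat(1)[OF Sm_carrier] by simp

lemma Sinv_vec_carrier[simp]: "Sinv n w lam *\<^sub>v v \<in> carrier_vec n"
  using Sinv_carrier[of n w lam] unfolding carrier_vec_def carrier_mat_def by simp

lemma Sinv_right: assumes "det (Sm n w lam) \<noteq> 0" shows "Sm n w lam * Sinv n w lam = 1\<^sub>m n"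
proof -
  have "Sm n w lam * Sinv n w lam = (1 / det (Sm n w lam)) \<cdot>\<^sub>m (Sm n w lam * adj_mat (Sm n w lam))"
    unfolding Sinv_def by (rule mult_smult_distrib[OF Sm_carrier adj_mat(1)[OF Sm_carrier]])
  also have "\<dots> = 1\<^sub>m n" unfolding adj_mat(2)[OF Sm_carrier] using assms
    by (rule_tac eq_matI, auto)
  finally show ?thesis .
qed

lemma Sinv_left: assumes "det (Sm n w lam) \<noteq> 0" shows "Sinv n w lam * Sm n w lam = 1\<^sub>m n"
proof -
  have "Sinv n w lam * Sm n w lam = (1 / det (Sm n w lam)) \<cdot>\<^sub>m (adj_mat (Sm n w lam) * Sm n w lam)"
    unfolding Sinv_def by (rule mult_smult_assoc_mat[OF adj_mat(1)[OF Sm_carrier] Sm_carrier])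
  also have "\<dots> = 1\<^sub>m n" unfolding adj_mat(3)[OF Sm_carrier] using assms
    by (rule_tac eq_matI, auto)
  finally show ?thesis .
qed

lemma Sinv_Sm_vec: assumes "det (Sm n w lam) \<noteq> 0" "v \<in> carrier_vec n"
  shows "Sinv n w lam *\<^sub>v (Sm n w lam *\<^sub>v v) = v"
proof -
  have "Sinv n w lam *\<^sub>v (Sm n w lam *\<^sub>v v) = (Sinv n w lam * Sm n w lam) *\<^sub>v v"
    using assms(2) by (subst assoc_mult_mat_vec[OF Sinv_carrier Sm_carrier assms(2)], simp)
  also have "\<dots> = v" unfolding Sinv_left[OF assms(1)] using assms(2) by simp
  finally show ?thesis .
qed

lemma Sm_Sinv_vec: assumes "det (Sm n w lam) \<noteq> 0" "v \<in> carrier_vec n"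
  shows "Sm n w lam *\<^sub>v (Sinv n w lam *\<^sub>v v) = v"
proof -
  have "Sm n w lam *\<^sub>v (Sinv n w lam *\<^sub>v v) = (Sm n w lam * Sinv n w lam) *\<^sub>v v"
    using assms(2) by (subst assoc_mult_mat_vec[OF Sm_carrier Sinv_carrier assms(2)], simp)
  also have "\<dots> = v" unfolding Sinv_right[OF assms(1)] using assms(2) by simp
  finally show ?thesis .
qed

lemma Sm_sym: assumes sym: "\<And>i k. i < n \<Longrightarrow> k < n \<Longrightarrow> w i k = w k i" and "i < n" "j < n"
  shows "Sm n w lam $$ (i,j) = Sm n w lam $$ (j,i)"
  using assms by (auto simp: Sm_index)

lemma sym_scalar: fixes M :: "real mat" assumes M: "M \<in> carrier_mat n n" and sym: "\<And>i j. i < n \<Longrightarrow> j < n \<Longrightarrow> M $$ (i,j) = M $$ (j,i)"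
  and a: "a \<in> carrier_vec n" and b: "b \<in> carrier_vec n"
  shows "(M *\<^sub>v a) \<bullet> b = a \<bullet> (M *\<^sub>v b)"
proof -
  have "(M *\<^sub>v a) \<bullet> b = (\<Sum>i\<in>{0..<n}. (\<Sum>j\<in>{0..<n}. M $$ (i,j) * a $ j) * b $ i)"
    using M a b by (simp add: scalar_prod_def row_def)
  also have "\<dots> = (\<Sum>i\<in>{0..<n}. \<Sum>j\<in>{0..<n}. M $$ (i,j) * a $ j * b $ i)"
    by (simp add: sum_distrib_right)
  also have "\<dots> = (\<Sum>j\<in>{0..<n}. \<Sum>i\<in>{0..<n}. M $$ (i,j) * a $ j * b $ i)"
    by (rule sum.swap)
  also have "\<dots> = (\<Sum>j\<in>{0..<n}. \<Sum>i\<in>{0..<n}. M $$ (j,i) * a $ j * b $ i)"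
    by (intro sum.cong refl, simp add: sym)
  also have "\<dots> = (\<Sum>j\<in>{0..<n}. a $ j * (\<Sum>i\<in>{0..<n}. M $$ (j,i) * b $ i))"
    unfolding sum_distrib_left by (intro sum.cong refl) (simp add: ac_simps)
  also have "\<dots> = a \<bullet> (M *\<^sub>v b)"
    using M a b by (simp add: scalar_prod_def row_def)
  finally show ?thesis .
qed

lemma Sinv_sym_scalar:
  assumes sym: "\<And>i k. i < n \<Longrightarrow> k < n \<Longrightarrow> w i k = w k i" and d: "det (Sm n w lam) \<noteq> 0"
  and a: "a \<in> carrier_vec n" and b: "b \<in> carrier_vec n"
  shows "a \<bullet> (Sinv n w lam *\<^sub>v b) = b \<bullet> (Sinv n w lam *\<^sub>v a)"
proof -
  let ?S = "Sm n w lam" and ?T = "Sinv n w lam"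
  have ca: "?T *\<^sub>v a \<in> carrier_vec n" and cb: "?T *\<^sub>v b \<in> carrier_vec n" using a b by auto
  have "a \<bullet> (?T *\<^sub>v b) = (?S *\<^sub>v (?T *\<^sub>v a)) \<bullet> (?T *\<^sub>v b)" using Sm_Sinv_vec[OF d a] by simp
  also have "\<dots> = (?T *\<^sub>v a) \<bullet> (?S *\<^sub>v (?T *\<^sub>v b))"
    by (rule sym_scalar[OF Sm_carrier _ ca cb], rule Sm_sym[OF sym], auto)
  also have "\<dots> = (?T *\<^sub>v a) \<bullet> b" using Sm_Sinv_vec[OF d b] by simp
  also have "\<dots> = b \<bullet> (?T *\<^sub>v a)" by (rule comm_scalar_prod[OF ca b])
  finally show ?thesis .
qed

lemma Sm_aut:
  assumes bij: "bij_betw al {0..<n} {0..<n}" and inv: "\<And>i j. i < n \<Longrightarrow> j < n \<Longrightarrow> w (al i) (al j) = w i j"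
  and i: "i < n" and j: "j < n"
  shows "Sm n w lam $$ (al i, al j) = Sm n w lam $$ (i, j)"
proof -
  have ai: "al i < n" "al j < n" using bij i j by (auto dest: bij_betw_apply)
  have eq: "al i = al j \<longleftrightarrow> i = j" using bij i j by (auto simp: bij_betw_def inj_on_def)
  have s1: "(\<Sum>k\<in>{0..<n}-{m}. w m k) = (\<Sum>k\<in>{0..<n}. w m k) - w m m" if "m < n" for m
    using that by (subst sum.remove[of _ m], auto)
  have "(\<Sum>k\<in>{0..<n}. w (al i) k) = (\<Sum>k\<in>{0..<n}. w (al i) (al k))"
    by (rule sum.reindex_bij_betw[OF bij, symmetric])
  also have "\<dots> = (\<Sum>k\<in>{0..<n}. w i k)" using i by (intro sum.cong, auto simp: inv)
  finally have "(\<Sum>k\<in>{0..<n}. w (al i) k) = (\<Sum>k\<in>{0..<n}. w i k)" .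
  thus ?thesis using ai i j eq s1[of i] s1[of "al i"] inv[OF i i] inv[OF i j] by (auto simp: Sm_index)
qed

lemma sol_aut:
  assumes bij: "bij_betw al {0..<n} {0..<n}" and inv: "\<And>i j. i < n \<Longrightarrow> j < n \<Longrightarrow> w (al i) (al j) = w i j"
  and d: "det (Sm n w lam) \<noteq> 0" and g: "g \<in> carrier_vec n" and ginv: "\<And>i. i < n \<Longrightarrow> g $ (al i) = g $ i"
  and i: "i < n"
  shows "(Sinv n w lam *\<^sub>v g) $ (al i) = (Sinv n w lam *\<^sub>v g) $ i"
proof -
  let ?S = "Sm n w lam"
  define phi where "phi = Sinv n w lam *\<^sub>v g"
  have phi: "phi \<in> carrier_vec n" unfolding phi_def using g by auto
  have Sphi: "?S *\<^sub>v phi = g" unfolding phi_def by (rule Sm_Sinv_vec[OF d g])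
  define psi where "psi = vec n (\<lambda>i. phi $ (al i))"
  have psi: "psi \<in> carrier_vec n" unfolding psi_def by auto
  have alr: "\<And>i. i < n \<Longrightarrow> al i < n" using bij by (auto dest: bij_betw_apply)
  have "?S *\<^sub>v psi = g"
  proof (rule eq_vecI)
    fix i assume "i < dim_vec g"
    hence i: "i < n" using g by auto
    have "(?S *\<^sub>v psi) $ i = (\<Sum>j\<in>{0..<n}. ?S $$ (i,j) * phi $ (al j))"
      using i psi by (simp add: scalar_prod_def row_def psi_def)
    also have "\<dots> = (\<Sum>j\<in>{0..<n}. ?S $$ (al i, al j) * phi $ (al j))"
      using i by (intro sum.cong, auto simp: Sm_aut[of al n w, OF bij inv])
    also have "\<dots> = (\<Sum>k\<in>{0..<n}. ?S $$ (al i, k) * phi $ k)"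
      by (rule sum.reindex_bij_betw[OF bij, of "\<lambda>k. ?S $$ (al i, k) * phi $ k"])
    also have "\<dots> = (?S *\<^sub>v phi) $ (al i)"
      using alr[OF i] phi by (simp add: scalar_prod_def row_def)
    also have "\<dots> = g $ i" using Sphi ginv[OF i] by simp
    finally show "(?S *\<^sub>v psi) $ i = g $ i" .
  qed (insert g, auto)
  hence "psi = phi" unfolding phi_def using Sinv_Sm_vec[OF d psi] by simp
  thus ?thesis using i unfolding phi_def[symmetric] psi_def by (metis index_vec)
qed

lemma poly_char_Sm: "poly (char_poly (wlap n w)) t = det (Sm n w t)"
proof -
  have "poly (char_poly (wlap n w)) t = det (- char_matrix (wlap n w) t)"
    by (rule char_poly_matrix[OF wlap_carrier])
  also have "- char_matrix (wlap n w) t = Sm n w t"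
    by (rule eq_matI, auto simp: char_matrix_def Sm_def wlap_def)
  finally show ?thesis .
qed

lemma Sm_det_pos:
  assumes w01: "\<And>i k. i < n \<Longrightarrow> k < n \<Longrightarrow> 0 \<le> w i k \<and> w i k \<le> 1"
    and sym: "\<And>i k. i < n \<Longrightarrow> k < n \<Longrightarrow> w i k = w k i"
    and lam: "lam > real n" and n: "n > 0"
  shows "det (Sm n w lam) > 0"
proof (rule ccontr)
  assume "\<not> det (Sm n w lam) > 0"
  moreover have "det (Sm n w lam) \<noteq> 0" by (rule Sm_det_nz[OF w01 sym lam n])
  ultimately have neg: "poly (char_poly (wlap n w)) lam < 0" unfolding poly_char_Sm by simp
  have "degree (char_poly (wlap n w)) = n \<and> coeff (char_poly (wlap n w)) n = 1"
    by (rule degree_monic_char_poly[OF wlap_carrier])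
  hence lc: "lead_coeff (char_poly (wlap n w)) = 1" by simp
  obtain N where N: "\<And>x. x \<ge> N \<Longrightarrow> poly (char_poly (wlap n w)) x \<ge> 1"
    using poly_pinfty_gt_lc[of "char_poly (wlap n w)"] lc by auto
  define b where "b = max N (lam + 1)"
  have "poly (char_poly (wlap n w)) b \<ge> 1" using N unfolding b_def by simp
  moreover have "lam < b" unfolding b_def by (simp add: less_max_iff_disj)
  ultimately obtain t where t: "lam < t" "t < b" "poly (char_poly (wlap n w)) t = 0"
    using poly_IVT_pos[of lam b "char_poly (wlap n w)"] neg by auto
  have tn: "real n < t" using t(1) lam by linarith
  have "det (Sm n w t) \<noteq> 0" by (rule Sm_det_nz[OF w01 sym tn n])
  with t(3) show False unfolding poly_char_Sm by simp
qed

definition mvec :: "nat \<Rightarrow> nat \<Rightarrow> nat \<Rightarrow> real vec" where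
  "mvec n x y = vec n (\<lambda>i. (if i = x then 1 else 0) - (if i = y then 1 else 0))"

definition gvec :: "nat \<Rightarrow> nat \<Rightarrow> nat \<Rightarrow> nat set \<Rightarrow> real vec" where
  "gvec n x y X = vec n (\<lambda>i. (if i = x \<or> i = y then real (card X) / 2 else 0) - (if i \<in> X then 1 else 0))"

definition Amat :: "nat \<Rightarrow> (nat \<Rightarrow> nat \<Rightarrow> real) \<Rightarrow> real \<Rightarrow> real \<Rightarrow> real vec \<Rightarrow> real vec \<Rightarrow> real mat" where
  "Amat n w lam c m s = Sm n w lam + mat n n (\<lambda>(i,j). c * (m $ i * s $ j + s $ i * m $ j))"

lemma sum_two_pts: fixes n :: nat assumes "x < n" "y < n" "x \<noteq> y"
  shows "(\<Sum>i\<in>{0..<n}. (if i = x \<or> i = y then c else 0) * (f i :: real)) = c * f x + c * f y"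
proof -
  have "(\<Sum>i\<in>{0..<n}. (if i = x \<or> i = y then c else 0) * f i)
      = (\<Sum>i\<in>{0..<n}. (if i = x then c * f i else 0) + (if i = y then c * f i else 0))"
    using assms by (intro sum.cong, auto)
  also have "\<dots> = c * f x + c * f y" using assms by (simp add: sum.distrib sum.delta)
  finally show ?thesis .
qed

lemma sum_set_pts: fixes n :: nat assumes "X \<subseteq> {0..<n}"
  shows "(\<Sum>i\<in>{0..<n}. (if i \<in> X then 1 else 0) * (f i :: real)) = (\<Sum>i\<in>X. f i)"
proof -
  have "(\<Sum>i\<in>{0..<n}. (if i \<in> X then 1 else 0) * f i) = (\<Sum>i\<in>{0..<n}. if i \<in> X then f i else 0)"
    by (intro sum.cong, auto)
  also have "\<dots> = (\<Sum>i\<in>{0..<n} \<inter> X. f i)" by (rule sum.inter_restrict[symmetric], simp)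
  also have "{0..<n} \<inter> X = X" using assms by auto
  finally show ?thesis .
qed

lemma mvec_carrier[simp]: "mvec n x y \<in> carrier_vec n" unfolding mvec_def by simp
lemma gvec_carrier[simp]: "gvec n x y X \<in> carrier_vec n" unfolding gvec_def by simp

lemma mvec_scalar: assumes "x < n" "y < n" "x \<noteq> y" "v \<in> carrier_vec n"
  shows "mvec n x y \<bullet> v = v $ x - v $ y"
proof -
  have "mvec n x y \<bullet> v = (\<Sum>i\<in>{0..<n}. (if i = x then v $ i else 0) - (if i = y then v $ i else 0))"
    using assms unfolding mvec_def scalar_prod_def by (intro sum.cong, auto)
  also have "\<dots> = v $ x - v $ y" using assms by (simp add: sum_subtractf)
  finally show ?thesis .
qed

lemma gvec_scalar: assumes "x < n" "y < n" "x \<noteq> y" "v \<in> carrier_vec n" "X \<subseteq> {0..<n}"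
  shows "gvec n x y X \<bullet> v = real (card X) / 2 * (v $ x + v $ y) - (\<Sum>i\<in>X. v $ i)"
proof -
  have "gvec n x y X \<bullet> v = (\<Sum>i\<in>{0..<n}. (if i = x \<or> i = y then real (card X) / 2 else 0) * v $ i
     - (if i \<in> X then 1 else 0) * v $ i)"
    using assms unfolding gvec_def scalar_prod_def by (intro sum.cong, auto simp: algebra_simps)
  also have "\<dots> = real (card X) / 2 * (v $ x + v $ y) - (\<Sum>i\<in>X. v $ i)"
    unfolding sum_subtractf sum_two_pts[OF assms(1-3)] sum_set_pts[OF assms(5)] by (simp add: algebra_simps)
  finally show ?thesis .
qed

lemma gvec_sum: assumes "x < n" "y < n" "x \<noteq> y" "X \<subseteq> {0..<n}"
  shows "(\<Sum>i\<in>{0..<n}. gvec n x y X $ i) = 0"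
proof -
  have "(\<Sum>i\<in>{0..<n}. gvec n x y X $ i) = gvec n x y X \<bullet> vec n (\<lambda>_. 1)"
    unfolding scalar_prod_def by simp
  also have "\<dots> = real (card X) / 2 * (1 + 1) - (\<Sum>i\<in>X. vec n (\<lambda>_. 1::real) $ i)"
    using assms by (subst gvec_scalar, auto)
  also have "(\<Sum>i\<in>X. vec n (\<lambda>_. 1::real) $ i) = (\<Sum>i\<in>X. 1)" using assms by (intro sum.cong, auto)
  finally show ?thesis by simp
qed

lemma mvec_sum: assumes "x < n" "y < n" "x \<noteq> y"
  shows "(\<Sum>i\<in>{0..<n}. mvec n x y $ i) = 0"
proof -
  have "(\<Sum>i\<in>{0..<n}. mvec n x y $ i) = mvec n x y \<bullet> vec n (\<lambda>_. 1)"
    unfolding scalar_prod_def by simp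
  also have "\<dots> = 0" using assms by (subst mvec_scalar, auto)
  finally show ?thesis .
qed

lemma quad_minus: fixes T :: "real mat"
  assumes T: "T \<in> carrier_mat n n" and a: "a \<in> carrier_vec n" and b: "b \<in> carrier_vec n"
  shows "(a - b) \<bullet> (T *\<^sub>v (a - b)) = a \<bullet> (T *\<^sub>v a) - a \<bullet> (T *\<^sub>v b) - b \<bullet> (T *\<^sub>v a) + b \<bullet> (T *\<^sub>v b)"
proof -
  have ta: "T *\<^sub>v a \<in> carrier_vec n" and tb: "T *\<^sub>v b \<in> carrier_vec n" using T a b by auto
  have "T *\<^sub>v (a - b) = T *\<^sub>v a - T *\<^sub>v b" by (rule mult_minus_distrib_mat_vec[OF T a b])
  moreover have "(a - b) \<bullet> (T *\<^sub>v a - T *\<^sub>v b) = a \<bullet> (T *\<^sub>v a - T *\<^sub>v b) - b \<bullet> (T *\<^sub>v a - T *\<^sub>v b)"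
    by (rule minus_scalar_prod_distrib[OF a b], insert ta tb, auto)
  moreover have "a \<bullet> (T *\<^sub>v a - T *\<^sub>v b) = a \<bullet> (T *\<^sub>v a) - a \<bullet> (T *\<^sub>v b)"
    by (rule scalar_prod_minus_distrib[OF a ta tb])
  moreover have "b \<bullet> (T *\<^sub>v a - T *\<^sub>v b) = b \<bullet> (T *\<^sub>v a) - b \<bullet> (T *\<^sub>v b)"
    by (rule scalar_prod_minus_distrib[OF b ta tb])
  ultimately show ?thesis by simp
qed

lemma quad_plus: fixes T :: "real mat"
  assumes T: "T \<in> carrier_mat n n" and a: "a \<in> carrier_vec n" and b: "b \<in> carrier_vec n"
  shows "(a + b) \<bullet> (T *\<^sub>v (a + b)) = a \<bullet> (T *\<^sub>v a) + a \<bullet> (T *\<^sub>v b) + b \<bullet> (T *\<^sub>v a) + b \<bullet> (T *\<^sub>v b)"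
proof -
  have ta: "T *\<^sub>v a \<in> carrier_vec n" and tb: "T *\<^sub>v b \<in> carrier_vec n" using T a b by auto
  have "T *\<^sub>v (a + b) = T *\<^sub>v a + T *\<^sub>v b" by (rule mult_add_distrib_mat_vec[OF T a b])
  moreover have "(a + b) \<bullet> (T *\<^sub>v a + T *\<^sub>v b) = a \<bullet> (T *\<^sub>v a + T *\<^sub>v b) + b \<bullet> (T *\<^sub>v a + T *\<^sub>v b)"
    by (rule add_scalar_prod_distrib[OF a b], insert ta tb, auto)
  moreover have "a \<bullet> (T *\<^sub>v a + T *\<^sub>v b) = a \<bullet> (T *\<^sub>v a) + a \<bullet> (T *\<^sub>v b)"
    by (rule scalar_prod_add_distrib[OF a ta tb])
  moreover have "b \<bullet> (T *\<^sub>v a + T *\<^sub>v b) = b \<bullet> (T *\<^sub>v a) + b \<bullet> (T *\<^sub>v b)"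
    by (rule scalar_prod_add_distrib[OF b ta tb])
  ultimately show ?thesis by simp
qed

lemma main_abstract:
  fixes n :: nat and w :: "nat \<Rightarrow> nat \<Rightarrow> real" and lam :: real and al :: "nat \<Rightarrow> nat"
  assumes w01: "\<And>i k. i < n \<Longrightarrow> k < n \<Longrightarrow> 0 \<le> w i k \<and> w i k \<le> 1"
    and sym: "\<And>i k. i < n \<Longrightarrow> k < n \<Longrightarrow> w i k = w k i"
    and lam: "lam > real n"
    and bij: "bij_betw al {0..<n} {0..<n}"
    and winv: "\<And>i j. i < n \<Longrightarrow> j < n \<Longrightarrow> w (al i) (al j) = w i j"
    and x: "x < n" and y: "y < n" and xy: "x \<noteq> y" and alx: "al x = y" and aly: "al y = x"
    and X: "X \<subseteq> {0..<n} - {x,y}" and Y: "Y \<subseteq> {0..<n} - {x,y}"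
    and fixv: "\<And>v. v \<in> X \<union> Y \<Longrightarrow> al v = v"
  shows "det (Amat n w lam (1/2) (mvec n x y) (gvec n x y X + gvec n x y Y))
       \<le> det (Amat n w lam (-1/2) (mvec n x y) (gvec n x y X - gvec n x y Y))"
proof -
  let ?S = "Sm n w lam" and ?T = "Sinv n w lam"
  define m where "m = mvec n x y"
  define a where "a = gvec n x y X"
  define b where "b = gvec n x y Y"
  have n0: "n > 0" using x by auto
  have dpos: "det ?S > 0" by (rule Sm_det_pos[OF w01 sym lam n0])
  hence dnz: "det ?S \<noteq> 0" by simp
  have SSi: "?S * ?T = 1\<^sub>m n" by (rule Sinv_right[OF dnz])
  have cm: "m \<in> carrier_vec n" and ca: "a \<in> carrier_vec n" and cb: "b \<in> carrier_vec n"
    unfolding m_def a_def b_def by auto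
  have Xn: "X \<subseteq> {0..<n}" and Yn: "Y \<subseteq> {0..<n}" using X Y by auto
  have inj: "inj_on al {0..<n}" using bij by (simp add: bij_betw_def)
  have alxy: "(al i = x \<or> al i = y) \<longleftrightarrow> (i = x \<or> i = y)" if i: "i < n" for i
  proof
    assume "al i = x \<or> al i = y"
    thus "i = x \<or> i = y" using inj i x y alx aly by (auto dest: inj_onD)
  qed (use alx aly in auto)
  have alS: "al i \<in> Z \<longleftrightarrow> i \<in> Z" if i: "i < n" and Z: "Z \<subseteq> X \<union> Y" for i Z
  proof
    assume "al i \<in> Z"
    hence "al (al i) = al i" using fixv Z by auto
    moreover have "al i < n" using bij i by (auto dest: bij_betw_apply)
    ultimately have "al i = i" using inj i by (auto dest: inj_onD)
    thus "i \<in> Z" using \<open>al i \<in> Z\<close> by simp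
  next
    assume "i \<in> Z" thus "al i \<in> Z" using fixv Z by auto
  qed
  have inva: "a $ (al i) = a $ i" if i: "i < n" for i
  proof -
    have "al i < n" using bij i by (auto dest: bij_betw_apply)
    thus ?thesis unfolding a_def gvec_def using i alxy[OF i] alS[OF i, of X] by auto
  qed
  have invb: "b $ (al i) = b $ i" if i: "i < n" for i
  proof -
    have "al i < n" using bij i by (auto dest: bij_betw_apply)
    thus ?thesis unfolding b_def gvec_def using i alxy[OF i] alS[OF i, of Y] by auto
  qed
  have solxy: "(?T *\<^sub>v s) $ x = (?T *\<^sub>v s) $ y"
    if s: "s \<in> carrier_vec n" and invs: "\<And>i. i < n \<Longrightarrow> s $ (al i) = s $ i" for s
    using sol_aut[OF bij winv dnz s invs y] aly by simp
  have key: "m \<bullet> (?T *\<^sub>v s) = 0 \<and> s \<bullet> (?T *\<^sub>v m) = 0"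
    if s: "s \<in> carrier_vec n" and invs: "\<And>i. i < n \<Longrightarrow> s $ (al i) = s $ i" for s
  proof -
    have 1: "m \<bullet> (?T *\<^sub>v s) = 0"
      unfolding m_def by (subst mvec_scalar[OF x y xy], auto simp: solxy[OF s invs])
    moreover have "s \<bullet> (?T *\<^sub>v m) = m \<bullet> (?T *\<^sub>v s)" by (rule Sinv_sym_scalar[OF sym dnz s cm])
    ultimately show ?thesis by simp
  qed
  have detA: "det (Amat n w lam c m s) = det ?S * (1 - c^2 * (s \<bullet> (?T *\<^sub>v s)) * (m \<bullet> (?T *\<^sub>v m)))"
    if s: "s \<in> carrier_vec n" and invs: "\<And>i. i < n \<Longrightarrow> s $ (al i) = s $ i" for s c
    unfolding Amat_def rank2_det[OF Sm_carrier Sinv_carrier SSi cm s] using key[OF s invs] by simp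
  define psi where "psi = ?T *\<^sub>v m"
  have cpsi: "psi \<in> carrier_vec n" unfolding psi_def by simp
  have Spsi: "?S *\<^sub>v psi = m" unfolding psi_def by (rule Sm_Sinv_vec[OF dnz cm])
  have mu: "m \<bullet> (?T *\<^sub>v m) \<ge> 0"
  proof -
    obtain u where u: "u < n" "\<And>k. k < n \<Longrightarrow> psi $ k \<le> psi $ u" using argmax_ex[OF n0, of "\<lambda>k. psi $ k"] by auto
    have "psi $ y \<le> psi $ x"
    proof (cases "u = x")
      case True thus ?thesis using u y by auto
    next
      case False
      have msum: "(\<Sum>i\<in>{0..<n}. m $ i) = 0" unfolding m_def by (rule mvec_sum[OF x y xy])
      have mu0: "m $ u \<le> 0" using False u(1) unfolding m_def mvec_def by auto
      have "\<And>k. k < n \<Longrightarrow> psi $ k = 0"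
        by (rule max_principle[OF w01 sym lam cpsi Spsi msum u(1) u(2) mu0])
      thus ?thesis using x y by simp
    qed
    moreover have "m \<bullet> psi = psi $ x - psi $ y" unfolding m_def by (rule mvec_scalar[OF x y xy cpsi])
    ultimately show ?thesis unfolding psi_def by simp
  qed
  define phi where "phi = ?T *\<^sub>v b"
  have cphi: "phi \<in> carrier_vec n" unfolding phi_def by simp
  have Sphi: "?S *\<^sub>v phi = b" unfolding phi_def by (rule Sm_Sinv_vec[OF dnz cb])
  have phixy: "phi $ x = phi $ y" unfolding phi_def by (rule solxy[OF cb invb])
  have phimax: "phi $ v \<le> phi $ x" if v: "v < n" for v
  proof -
    obtain u where u: "u < n" "\<And>k. k < n \<Longrightarrow> phi $ k \<le> phi $ u" using argmax_ex[OF n0, of "\<lambda>k. phi $ k"] by auto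
    show ?thesis
    proof (cases "u = x \<or> u = y")
      case True thus ?thesis using u v phixy by auto
    next
      case False
      have bsum: "(\<Sum>i\<in>{0..<n}. b $ i) = 0" unfolding b_def by (rule gvec_sum[OF x y xy Yn])
      have bu0: "b $ u \<le> 0" using False u(1) unfolding b_def gvec_def by auto
      have "\<And>k. k < n \<Longrightarrow> phi $ k = 0"
        by (rule max_principle[OF w01 sym lam cphi Sphi bsum u(1) u(2) bu0])
      thus ?thesis using x v by simp
    qed
  qed
  have R: "a \<bullet> (?T *\<^sub>v b) \<ge> 0"
  proof -
    have "a \<bullet> phi = real (card X) / 2 * (phi $ x + phi $ y) - (\<Sum>i\<in>X. phi $ i)"
      unfolding a_def by (rule gvec_scalar[OF x y xy cphi Xn])
    also have "\<dots> = (\<Sum>i\<in>X. phi $ x) - (\<Sum>i\<in>X. phi $ i)" using phixy by simp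
    also have "\<dots> \<ge> 0"
    proof -
      have "(\<Sum>i\<in>X. phi $ i) \<le> (\<Sum>i\<in>X. phi $ x)" by (rule sum_mono, insert phimax Xn, auto)
      thus ?thesis by linarith
    qed
    finally show ?thesis unfolding phi_def .
  qed
  have symab: "b \<bullet> (?T *\<^sub>v a) = a \<bullet> (?T *\<^sub>v b)" by (rule Sinv_sym_scalar[OF sym dnz cb ca])
  have cab1: "a + b \<in> carrier_vec n" and cab2: "a - b \<in> carrier_vec n" using ca cb by auto
  have inv1: "(a + b) $ (al i) = (a + b) $ i" if "i < n" for i
    using that inva[OF that] invb[OF that] bij ca cb by (auto dest: bij_betw_apply)
  have inv2: "(a - b) $ (al i) = (a - b) $ i" if "i < n" for i
    using that inva[OF that] invb[OF that] bij ca cb by (auto dest: bij_betw_apply)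
  have q1: "(a + b) \<bullet> (?T *\<^sub>v (a + b)) = a \<bullet> (?T *\<^sub>v a) + 2 * (a \<bullet> (?T *\<^sub>v b)) + b \<bullet> (?T *\<^sub>v b)"
    using quad_plus[OF Sinv_carrier ca cb] symab by simp
  have q2: "(a - b) \<bullet> (?T *\<^sub>v (a - b)) = a \<bullet> (?T *\<^sub>v a) - 2 * (a \<bullet> (?T *\<^sub>v b)) + b \<bullet> (?T *\<^sub>v b)"
    using quad_minus[OF Sinv_carrier ca cb] symab by simp
  have e1: "det (Amat n w lam (1/2) m (a + b)) = det ?S * (1 - (1/2)^2 * ((a + b) \<bullet> (?T *\<^sub>v (a + b))) * (m \<bullet> (?T *\<^sub>v m)))"
    by (rule detA[OF cab1 inv1])
  have e2: "det (Amat n w lam (-1/2) m (a - b)) = det ?S * (1 - (-1/2)^2 * ((a - b) \<bullet> (?T *\<^sub>v (a - b))) * (m \<bullet> (?T *\<^sub>v m)))"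
    by (rule detA[OF cab2 inv2])
  have "det (Amat n w lam (-1/2) m (a - b)) - det (Amat n w lam (1/2) m (a + b))
     = det ?S * (m \<bullet> (?T *\<^sub>v m)) * (a \<bullet> (?T *\<^sub>v b))"
    unfolding e1 e2 q1 q2
    by (simp add: power2_eq_square algebra_simps)
  also have "\<dots> \<ge> 0" using dpos mu R by simp
  finally show ?thesis unfolding m_def a_def b_def by simp
qed

lemma sum_minus_one: fixes n :: nat assumes "i < n"
  shows "(\<Sum>k\<in>{0..<n}-{i}. f k) = (\<Sum>k\<in>{0..<n}. f k) - (f i :: real)"
  using assms by (subst sum.remove[of "{0..<n}" i], auto)

lemma wlap_decomp:
  assumes w': "\<And>i k. i < n \<Longrightarrow> k < n \<Longrightarrow> i \<noteq> k \<Longrightarrow> w' i k = w i k - c * (m $ i * s $ k + s $ i * m $ k)"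
    and msum: "(\<Sum>i\<in>{0..<n}. m $ i) = 0" and ssum: "(\<Sum>i\<in>{0..<n}. s $ i) = 0"
  shows "wlap n w' = wlap n w + mat n n (\<lambda>(i,j). c * (m $ i * s $ j + s $ i * m $ j))"
proof (rule eq_matI)
  fix i j assume i: "i < dim_row (wlap n w + mat n n (\<lambda>(i,j). c * (m $ i * s $ j + s $ i * m $ j)))"
    and j: "j < dim_col (wlap n w + mat n n (\<lambda>(i,j). c * (m $ i * s $ j + s $ i * m $ j)))"
  hence i: "i < n" and j: "j < n" by (auto simp: wlap_def)
  show "wlap n w' $$ (i, j) = (wlap n w + mat n n (\<lambda>(i,j). c * (m $ i * s $ j + s $ i * m $ j))) $$ (i, j)"
  proof (cases "i = j")
    case False thus ?thesis using i j w'[OF i j False] by (simp add: wlap_def)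
  next
    case True
    have "(\<Sum>k\<in>{0..<n}-{i}. w' i k) = (\<Sum>k\<in>{0..<n}-{i}. w i k - c * (m $ i * s $ k + s $ i * m $ k))"
      using i w' by (intro sum.cong, auto)
    also have "\<dots> = (\<Sum>k\<in>{0..<n}-{i}. w i k) - c * (m $ i * (\<Sum>k\<in>{0..<n}-{i}. s $ k) + s $ i * (\<Sum>k\<in>{0..<n}-{i}. m $ k))"
    proof -
      have "(\<Sum>k\<in>{0..<n}-{i}. c * (m $ i * s $ k + s $ i * m $ k)) = c * (m $ i * (\<Sum>k\<in>{0..<n}-{i}. s $ k) + s $ i * (\<Sum>k\<in>{0..<n}-{i}. m $ k))"
        by (simp add: sum_distrib_left sum.distrib algebra_simps)
      thus ?thesis by (simp add: sum_subtractf)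
    qed
    also have "(\<Sum>k\<in>{0..<n}-{i}. s $ k) = - s $ i" using sum_minus_one[OF i, of "\<lambda>k. s $ k"] ssum by simp
    also have "(\<Sum>k\<in>{0..<n}-{i}. m $ k) = - m $ i" using sum_minus_one[OF i, of "\<lambda>k. m $ k"] msum by simp
    finally show ?thesis using True i by (simp add: wlap_def algebra_simps)
  qed
qed (auto simp: wlap_def)

lemma lap_wlap: assumes "simple_graph n F"
  shows "laplacian n F = wlap n (\<lambda>i k. of_bool (F i k))"
proof (rule eq_matI)
  fix i j assume "i < dim_row (wlap n (\<lambda>i k. of_bool (F i k)))" "j < dim_col (wlap n (\<lambda>i k. of_bool (F i k)))"
  hence i: "i < n" and j: "j < n" by (auto simp: wlap_def)
  have "nbhd F i = ({0..<n}-{i}) \<inter> {k. F i k}" using assms unfolding simple_graph_def nbhd_def by auto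
  hence "real (card (nbhd F i)) = (\<Sum>k\<in>{0..<n}-{i}. of_bool (F i k))" by simp
  thus "laplacian n F $$ (i, j) = wlap n (\<lambda>i k. of_bool (F i k)) $$ (i, j)"
    using i j by (auto simp: laplacian_def wlap_def)
qed (auto simp: laplacian_def wlap_def)

lemma Sm_wlap_eq: "Sm n w lam = lam \<cdot>\<^sub>m 1\<^sub>m n - wlap n w" by (simp add: Sm_def)

lemma lap_poly_eval:
  assumes lam: "lam \<noteq> 0" and n: "n > 0"
  shows "poly (char_poly (wlap n w) div [:0, 1:]) lam = det (Sm n w lam) / lam"
proof -
  let ?p = "char_poly (wlap n w)"
  have "Sm n w 0 *\<^sub>v vec n (\<lambda>_. 1) = 0\<^sub>v n"
    by (rule eq_vecI, subst Sm_mult, auto)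
  moreover have "vec n (\<lambda>_. 1::real) \<noteq> 0\<^sub>v n"
  proof
    assume "vec n (\<lambda>_. 1::real) = 0\<^sub>v n"
    hence "vec n (\<lambda>_. 1::real) $ 0 = 0\<^sub>v n $ 0" by simp
    with n show False by simp
  qed
  ultimately have "det (Sm n w 0) = 0"
    using det_0_iff_vec_prod_zero_field[OF Sm_carrier, of n w 0] by (auto intro!: exI[of _ "vec n (\<lambda>_. 1)"])
  hence "poly ?p 0 = 0" by (simp add: poly_char_Sm)
  hence "[:0, 1:] dvd ?p" using poly_eq_0_iff_dvd[of ?p 0] by simp
  hence "?p = [:0, 1:] * (?p div [:0, 1:])" by (rule dvd_mult_div_cancel[symmetric])
  hence "poly ?p lam = poly ([:0, 1:] * (?p div [:0, 1:])) lam" by simp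
  hence "poly ?p lam = lam * poly (?p div [:0, 1:]) lam" by simp
  thus ?thesis using lam by (simp add: poly_char_Sm field_simps)
qed

lemma poly_nonneg_closed: fixes p :: "real poly"
  assumes "\<And>t. t > a \<Longrightarrow> poly p t \<ge> 0" shows "poly p a \<ge> 0"
proof -
  have "((\<lambda>t. poly p t) \<longlongrightarrow> poly p a) (at a)" using poly_isCont[of a p] by (simp add: isCont_def)
  hence lim: "((\<lambda>t. poly p t) \<longlongrightarrow> poly p a) (at_right a)" by (rule tendsto_within_subset, simp)
  have ev: "eventually (\<lambda>t. (\<lambda>_. 0) t \<le> poly p t) (at_right a)"
    using eventually_at_right_less[of a] by (rule eventually_mono, simp add: assms)
  show ?thesis by (rule tendsto_le[OF trivial_limit_at_right_real lim tendsto_const ev])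
qed

lemma Sm_Amat:
  assumes "wlap n w' = wlap n w + mat n n (\<lambda>(i,j). c * (m $ i * s $ j + s $ i * m $ j))"
  shows "Sm n w' t = Amat n w t (- c) m s"
  unfolding Sm_def Amat_def assms by (rule eq_matI, auto simp: wlap_def algebra_simps)

theorem mainTheorem3:
  fixes n :: nat and E :: "nat \<Rightarrow> nat \<Rightarrow> bool" and K :: "nat set" and x y :: nat
    and lam :: real
  assumes "simple_graph n E"
    and "Kxy_valid n E K x y"
    and "Kxy_symmetric n E K x y"
    and "lam \<ge> real n"
  shows "poly (lap_poly n E) lam \<ge> poly (lap_poly n (Kxy_op E K x y)) lam"
proof -
  define X where "X = Xset E K x y"
  define Y where "Y = Xset E K y x"
  define E0 where "E0 = del_star (del_star E x X) y Y"
  define E' where "E' = Kxy_op E K x y"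
  have sgn: "\<And>u v. E u v \<Longrightarrow> u < n \<and> v < n" and sgs: "\<And>u v. E u v \<Longrightarrow> E v u"
    and sgi: "\<And>u. \<not> E u u" using assms(1) unfolding simple_graph_def by auto
  have xK: "x \<in> K" "y \<in> K" "x \<noteq> y" "K \<subseteq> {0..<n}" using assms(2) unfolding Kxy_valid_def by auto
  hence xn: "x < n" "y < n" by auto
  obtain al where alaut: "graph_aut n E0 al" and alx: "al x = y" and aly: "al y = x"
    and alfix: "\<And>v. v \<in> X \<union> Y \<Longrightarrow> al v = v"
    using assms(3) unfolding Kxy_symmetric_def E0_def X_def Y_def by blast
  have Xd: "v \<in> X \<longleftrightarrow> E x v \<and> v \<notin> K \<and> \<not> E y v" for v unfolding X_def Xset_def nbhd_def by auto
  have Yd: "v \<in> Y \<longleftrightarrow> E y v \<and> v \<notin> K \<and> \<not> E x v" for v unfolding Y_def Xset_def nbhd_def by auto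
  have E0d: "E0 u v \<longleftrightarrow> E u v \<and> \<not> ((u = x \<and> v \<in> X) \<or> (v = x \<and> u \<in> X)) \<and> \<not> ((u = y \<and> v \<in> Y) \<or> (v = y \<and> u \<in> Y))" for u v
    unfolding E0_def del_star_def by auto
  have E'd: "E' u v \<longleftrightarrow> (E u v \<and> \<not> ((u = x \<and> v \<in> X) \<or> (v = x \<and> u \<in> X))) \<or> (u = y \<and> v \<in> X) \<or> (v = y \<and> u \<in> X)" for u v
    unfolding E'_def Kxy_op_def del_star_def X_def by auto
  have Xsub: "X \<subseteq> {0..<n} - {x,y}" using Xd sgn sgi xK by fastforce
  have Ysub: "Y \<subseteq> {0..<n} - {x,y}" using Yd sgn sgi xK by fastforce
  have XY: "X \<inter> Y = {}" using Xd Yd by auto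
  have sgE': "simple_graph n E'" unfolding simple_graph_def using E'd sgn sgs sgi Xsub xn by auto
  define Z where "Z = X \<union> Y"
  define ws where "ws = (\<lambda>i k. of_bool (E0 i k) + (if (i = x \<or> i = y) \<and> k \<in> Z \<or> (k = x \<or> k = y) \<and> i \<in> Z then 1/2 else 0 :: real))"
  have E0sym: "E0 u v \<longleftrightarrow> E0 v u" for u v using E0d sgs by blast
  have E0nZ: "\<not> ((i = x \<or> i = y) \<and> k \<in> Z \<or> (k = x \<or> k = y) \<and> i \<in> Z)" if "E0 i k" for i k
    using that E0d Xd Yd sgs unfolding Z_def by blast
  have w01: "0 \<le> ws i k \<and> ws i k \<le> 1" for i k using E0nZ[of i k] unfolding ws_def by auto
  have wsym: "ws i k = ws k i" for i k unfolding ws_def using E0sym[of i k] by auto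
  have bij: "bij_betw al {0..<n} {0..<n}" and E0inv: "\<And>i j. i < n \<Longrightarrow> j < n \<Longrightarrow> E0 (al i) (al j) \<longleftrightarrow> E0 i j"
    using alaut unfolding graph_aut_def by auto
  have inj: "inj_on al {0..<n}" using bij by (simp add: bij_betw_def)
  have alxy: "(al i = x \<or> al i = y) \<longleftrightarrow> (i = x \<or> i = y)" if i: "i < n" for i
  proof
    assume "al i = x \<or> al i = y"
    thus "i = x \<or> i = y" using inj i xn alx aly by (auto dest: inj_onD)
  qed (use alx aly in auto)
  have alZ: "al i \<in> Z \<longleftrightarrow> i \<in> Z" if i: "i < n" for i
  proof
    assume "al i \<in> Z"
    hence "al (al i) = al i" using alfix unfolding Z_def by auto
    moreover have "al i < n" using bij i by (auto dest: bij_betw_apply)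
    ultimately have "al i = i" using inj i by (auto dest: inj_onD)
    thus "i \<in> Z" using \<open>al i \<in> Z\<close> by simp
  next
    assume "i \<in> Z" thus "al i \<in> Z" using alfix unfolding Z_def by auto
  qed
  have winv: "ws (al i) (al j) = ws i j" if "i < n" "j < n" for i j
    unfolding ws_def using E0inv[OF that] alxy[OF that(1)] alxy[OF that(2)] alZ[OF that(1)] alZ[OF that(2)] by auto
  define m where "m = mvec n x y"
  define gX where "gX = gvec n x y X"
  define gY where "gY = gvec n x y Y"
  define r where "r = gX - gY"
  define q where "q = gX + gY"
  have mv: "m $ i = (if i = x then 1 else if i = y then -1 else 0)" if "i < n" for i
    using that xK unfolding m_def mvec_def by auto
  have gXv: "gX $ i = (if i = x \<or> i = y then real (card X) / 2 else 0) - (if i \<in> X then 1 else 0)" if "i < n" for i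
    using that unfolding gX_def gvec_def by auto
  have gYv: "gY $ i = (if i = x \<or> i = y then real (card Y) / 2 else 0) - (if i \<in> Y then 1 else 0)" if "i < n" for i
    using that unfolding gY_def gvec_def by auto
  have rv: "r $ i = gX $ i - gY $ i" if "i < n" for i using that unfolding r_def gX_def gY_def gvec_def by simp
  have qv: "q $ i = gX $ i + gY $ i" if "i < n" for i using that unfolding q_def gX_def gY_def gvec_def by simp
  have nxy: "x \<notin> X" "y \<notin> X" "x \<notin> Y" "y \<notin> Y" using Xsub Ysub by auto
  define cX where "cX = real (card X) / 2"
  define cY where "cY = real (card Y) / 2"
  have mx: "m $ x = 1" and my: "m $ y = -1" using mv xn xK(3) by auto
  have mo: "m $ k = 0" if "k < n" "k \<noteq> x" "k \<noteq> y" for k using mv that by auto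
  have rx: "r $ x = cX - cY" and ry: "r $ y = cX - cY"
    using rv xn gXv gYv nxy unfolding cX_def cY_def by auto
  have ro: "r $ k = (if k \<in> Y then 1 else 0) - (if k \<in> X then 1 else 0)" if "k < n" "k \<noteq> x" "k \<noteq> y" for k
    using rv[OF that(1)] gXv[OF that(1)] gYv[OF that(1)] that by auto
  have qx: "q $ x = cX + cY" and qy: "q $ y = cX + cY"
    using qv xn gXv gYv nxy unfolding cX_def cY_def by auto
  have qo: "q $ k = - (if k \<in> Y then 1 else 0) - (if k \<in> X then 1 else 0)" if "k < n" "k \<noteq> x" "k \<noteq> y" for k
    using qv[OF that(1)] gXv[OF that(1)] gYv[OF that(1)] that by auto
  have wsxy: "ws x y = of_bool (E x y)" using E0d[of x y] nxy unfolding ws_def Z_def by auto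
  have wsxo: "ws x k = of_bool (E0 x k) + (if k \<in> Z then 1/2 else 0)" if "k \<noteq> x" "k \<noteq> y" for k
    using that nxy unfolding ws_def Z_def by auto
  have wsyo: "ws y k = of_bool (E0 y k) + (if k \<in> Z then 1/2 else 0)" if "k \<noteq> x" "k \<noteq> y" for k
    using that nxy unfolding ws_def Z_def by auto
  have wsoo: "ws i k = of_bool (E0 i k)" if "i \<noteq> x" "i \<noteq> y" "k \<noteq> x" "k \<noteq> y" for i k
    using that unfolding ws_def Z_def by auto
  have ptE0: "of_bool (E i k) = ws i k - 1/2 * (m $ i * r $ k + r $ i * m $ k)"
    if i: "i < n" and k: "k < n" and ik: "i \<noteq> k" and ixy: "i = x \<or> i = y \<or> (k \<noteq> x \<and> k \<noteq> y)" for i k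
  proof -
    consider (a) "i = x" | (b) "i = y" | (c) "i \<noteq> x" "i \<noteq> y" by blast
    thus ?thesis
    proof cases
      case a
      consider (ky) "k = y" | (ko) "k \<noteq> x" "k \<noteq> y" using ik a by blast
      thus ?thesis
      proof cases
        case ky thus ?thesis using a wsxy mx my rx ry by simp
      next
        case ko
        have "k \<in> X \<Longrightarrow> E x k \<and> \<not> E0 x k" using Xd[of k] E0d[of x k] by auto
        moreover have "k \<in> Y \<Longrightarrow> \<not> E x k \<and> \<not> E0 x k \<and> k \<notin> X" using Yd[of k] E0d[of x k] XY by auto
        moreover have "k \<notin> X \<Longrightarrow> k \<notin> Y \<Longrightarrow> E0 x k = E x k" using E0d[of x k] ko xK(3) by auto
        ultimately show ?thesis using a ko wsxo[OF ko] mx mo[OF k ko] ro[OF k ko] unfolding Z_def by auto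
      qed
    next
      case b
      consider (kx) "k = x" | (ko) "k \<noteq> x" "k \<noteq> y" using ik b by blast
      thus ?thesis
      proof cases
        case kx thus ?thesis using b wsxy wsym[of x y] sgs[of x y] sgs[of y x] mx my rx ry by auto
      next
        case ko
        have "k \<in> Y \<Longrightarrow> E y k \<and> \<not> E0 y k" using Yd[of k] E0d[of y k] by auto
        moreover have "k \<in> X \<Longrightarrow> \<not> E y k \<and> \<not> E0 y k \<and> k \<notin> Y" using Xd[of k] E0d[of y k] XY by auto
        moreover have "k \<notin> X \<Longrightarrow> k \<notin> Y \<Longrightarrow> E0 y k = E y k" using E0d[of y k] ko xK(3) by auto
        ultimately show ?thesis using b ko wsyo[OF ko] my mo[OF k ko] ro[OF k ko] unfolding Z_def by auto
      qed
    next
      case c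
      hence ko: "k \<noteq> x" "k \<noteq> y" using ixy by auto
      have "E0 i k = E i k" using E0d[of i k] c ko by auto
      thus ?thesis using wsoo[OF c ko] mo[OF i c] mo[OF k ko] by simp
    qed
  qed
  have ptE: "of_bool (E i k) = ws i k - 1/2 * (m $ i * r $ k + r $ i * m $ k)"
    if i: "i < n" and k: "k < n" and ik: "i \<noteq> k" for i k
  proof (cases "i = x \<or> i = y \<or> (k \<noteq> x \<and> k \<noteq> y)")
    case True thus ?thesis by (rule ptE0[OF i k ik])
  next
    case False
    hence "k = x \<or> k = y \<or> (i \<noteq> x \<and> i \<noteq> y)" by auto
    from ptE0[OF k i ik[symmetric] this] show ?thesis
    proof -
      have "E i k = E k i" using sgs by blast
      thus "of_bool (E k i) = ws k i - 1 / 2 * (m $ k * r $ i + r $ k * m $ i) \<Longrightarrow> ?thesis"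
        using wsym[of i k] by (simp add: algebra_simps)
    qed
  qed
  have ptE0': "of_bool (E' i k) = ws i k - (-1/2) * (m $ i * q $ k + q $ i * m $ k)"
    if i: "i < n" and k: "k < n" and ik: "i \<noteq> k" and ixy: "i = x \<or> i = y \<or> (k \<noteq> x \<and> k \<noteq> y)" for i k
  proof -
    consider (a) "i = x" | (b) "i = y" | (c) "i \<noteq> x" "i \<noteq> y" by blast
    thus ?thesis
    proof cases
      case a
      consider (ky) "k = y" | (ko) "k \<noteq> x" "k \<noteq> y" using ik a by blast
      thus ?thesis
      proof cases
        case ky
        have "E' x y = E x y" using E'd[of x y] nxy xK(3) by auto
        thus ?thesis using a ky wsxy mx my qx qy by simp
      next
        case ko
        have "k \<in> X \<Longrightarrow> \<not> E' x k \<and> \<not> E0 x k \<and> k \<notin> Y" using E'd[of x k] E0d[of x k] XY xK(3) ko nxy by auto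
        moreover have "k \<in> Y \<Longrightarrow> \<not> E' x k \<and> \<not> E0 x k \<and> k \<notin> X" using Yd[of k] E'd[of x k] E0d[of x k] XY xK(3) ko nxy by auto
        moreover have "k \<notin> X \<Longrightarrow> k \<notin> Y \<Longrightarrow> E0 x k = E' x k" using E0d[of x k] E'd[of x k] ko xK(3) by auto
        ultimately show ?thesis using a ko wsxo[OF ko] mx mo[OF k ko] qo[OF k ko] unfolding Z_def by auto
      qed
    next
      case b
      consider (kx) "k = x" | (ko) "k \<noteq> x" "k \<noteq> y" using ik b by blast
      thus ?thesis
      proof cases
        case kx
        have "E' y x = E x y" using E'd[of y x] nxy xK(3) sgs[of x y] sgs[of y x] by auto
        thus ?thesis using b kx wsxy wsym[of x y] mx my qx qy by simp
      next
        case ko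
        have "k \<in> Y \<Longrightarrow> E' y k \<and> \<not> E0 y k \<and> k \<notin> X" using Yd[of k] E'd[of y k] E0d[of y k] XY xK(3) ko nxy by auto
        moreover have "k \<in> X \<Longrightarrow> E' y k \<and> \<not> E0 y k \<and> k \<notin> Y" using Xd[of k] E'd[of y k] E0d[of y k] XY ko nxy by auto
        moreover have "k \<notin> X \<Longrightarrow> k \<notin> Y \<Longrightarrow> E0 y k = E' y k" using E0d[of y k] E'd[of y k] ko xK(3) by auto
        ultimately show ?thesis using b ko wsyo[OF ko] my mo[OF k ko] qo[OF k ko] unfolding Z_def by auto
      qed
    next
      case c
      hence ko: "k \<noteq> x" "k \<noteq> y" using ixy by auto
      have "E0 i k = E' i k" using E0d[of i k] E'd[of i k] c ko by auto
      thus ?thesis using wsoo[OF c ko] mo[OF i c] mo[OF k ko] by simp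
    qed
  qed
  have E'sym: "E' i k = E' k i" for i k using sgE' unfolding simple_graph_def by blast
  have ptE': "of_bool (E' i k) = ws i k - (-1/2) * (m $ i * q $ k + q $ i * m $ k)"
    if i: "i < n" and k: "k < n" and ik: "i \<noteq> k" for i k
  proof (cases "i = x \<or> i = y \<or> (k \<noteq> x \<and> k \<noteq> y)")
    case True thus ?thesis by (rule ptE0'[OF i k ik])
  next
    case False
    hence "k = x \<or> k = y \<or> (i \<noteq> x \<and> i \<noteq> y)" by auto
    from ptE0'[OF k i ik[symmetric] this] show ?thesis
      using wsym[of i k] E'sym[of i k] by (auto simp: algebra_simps)
  qed
  have Xn: "X \<subseteq> {0..<n}" and Yn: "Y \<subseteq> {0..<n}" using Xsub Ysub by auto
  have msum: "(\<Sum>i\<in>{0..<n}. m $ i) = 0" unfolding m_def by (rule mvec_sum[OF xn xK(3)])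
  have gXsum: "(\<Sum>i\<in>{0..<n}. gX $ i) = 0" unfolding gX_def by (rule gvec_sum[OF xn xK(3) Xn])
  have gYsum: "(\<Sum>i\<in>{0..<n}. gY $ i) = 0" unfolding gY_def by (rule gvec_sum[OF xn xK(3) Yn])
  have rsum: "(\<Sum>i\<in>{0..<n}. r $ i) = 0"
  proof -
    have "(\<Sum>i\<in>{0..<n}. r $ i) = (\<Sum>i\<in>{0..<n}. gX $ i - gY $ i)" by (intro sum.cong, auto simp: rv)
    thus ?thesis using gXsum gYsum by (simp add: sum_subtractf)
  qed
  have qsum: "(\<Sum>i\<in>{0..<n}. q $ i) = 0"
  proof -
    have "(\<Sum>i\<in>{0..<n}. q $ i) = (\<Sum>i\<in>{0..<n}. gX $ i + gY $ i)" by (intro sum.cong, auto simp: qv)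
    thus ?thesis using gXsum gYsum by (simp add: sum.distrib)
  qed
  have decE: "wlap n (\<lambda>i k. of_bool (E i k)) = wlap n ws + mat n n (\<lambda>(i,j). (1/2) * (m $ i * r $ j + r $ i * m $ j))"
    by (rule wlap_decomp[OF ptE msum rsum])
  have decE': "wlap n (\<lambda>i k. of_bool (E' i k)) = wlap n ws + mat n n (\<lambda>(i,j). (-1/2) * (m $ i * q $ j + q $ i * m $ j))"
    by (rule wlap_decomp[OF ptE' msum qsum])
  have n0: "n > 0" using xn by auto
  have key: "poly (lap_poly n E') t \<le> poly (lap_poly n E) t" if t: "t > real n" for t
  proof -
    have t0: "t \<noteq> 0" "t > 0" using t by auto
    have pE: "poly (lap_poly n E) t = det (Sm n (\<lambda>i k. of_bool (E i k)) t) / t"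
      unfolding lap_poly_def lap_wlap[OF assms(1)] by (rule lap_poly_eval[OF t0(1) n0])
    have pE': "poly (lap_poly n E') t = det (Sm n (\<lambda>i k. of_bool (E' i k)) t) / t"
      unfolding lap_poly_def lap_wlap[OF sgE'] by (rule lap_poly_eval[OF t0(1) n0])
    have SE: "Sm n (\<lambda>i k. of_bool (E i k)) t = Amat n ws t (-1/2) m (gX - gY)"
      using Sm_Amat[OF decE, of t] unfolding r_def by simp
    have SE': "Sm n (\<lambda>i k. of_bool (E' i k)) t = Amat n ws t (1/2) m (gX + gY)"
      using Sm_Amat[OF decE', of t] unfolding q_def by simp
    have "det (Amat n ws t (1/2) (mvec n x y) (gvec n x y X + gvec n x y Y))
       \<le> det (Amat n ws t (-1/2) (mvec n x y) (gvec n x y X - gvec n x y Y))"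
    proof -
      have w01': "\<And>i k. i < n \<Longrightarrow> k < n \<Longrightarrow> 0 \<le> ws i k \<and> ws i k \<le> 1" using w01 by auto
      have wsym': "\<And>i k. i < n \<Longrightarrow> k < n \<Longrightarrow> ws i k = ws k i" using wsym by auto
      show ?thesis by (rule main_abstract[where w=ws, OF w01' wsym' t bij winv xn xK(3) alx aly Xsub Ysub alfix])
    qed
    hence "det (Sm n (\<lambda>i k. of_bool (E' i k)) t) \<le> det (Sm n (\<lambda>i k. of_bool (E i k)) t)"
      unfolding SE SE' m_def gX_def gY_def .
    thus ?thesis unfolding pE pE' using t0 by (simp add: divide_right_mono)
  qed
  have "poly (lap_poly n E - lap_poly n E') lam \<ge> 0"
    by (rule poly_nonneg_closed, insert key assms(4), auto simp: diff_ge_0_iff_ge)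
  thus ?thesis unfolding E'_def by simp
qed

end
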